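(* No strict two-stage algorithm for the hypergraph orientation problem has competitive ratio $o(\log n)$, even on instances consisting of a single hyperedge with $n$ vertices and uniform query costs. That is, there is a constant $c>0$ such that for every $n\ge 2$ there is an instance consisting of a single hyperedge on $n$ vertices with uniform query costs on which every strict two-stage algorithm $A$ satisfies $\mathbb E[A]\ge c\log n\cdot\mathbb E[\mathrm{OPT}]$.
   Context: An instance of the hypergraph orientation problem consists of a hypergraph $H=(V,E)$ and, for each vertex $v$, a query cost $c_v$ and a continuous distribution with minimal support interval $I_v$; weights $w_v$ are drawn independently and querying $v$ reveals $w_v$ at cost $c_v$. For a realization, $Q$ is a feasible query set if knowing $w_u$ for $u\in Q$ and only the intervals for unqueried vertices suffices to identify a minimum-weight vertex of every hyperedge; $\mathbb E[\mathrm{OPT}]$ is the expected minimum cost of a feasible query set; $\mathbb E[A]$ is the expected query cost of algorithm $A$. Uniform query costs means $c_v=1$. A strict two-stage algorithm first queries a fixed set $U_1\subseteq V$ (chosen non-adaptively), then queries a set $U_2$ chosen as a function of the revealed weights of $U_1$ (all at once, non-adaptively), and must guarantee that $U_1\cup U_2$ is a feasible query set for every realization. *)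

theory Defs
  imports "HOL-Probability.Probability"
begin

definition supp_dist :: "real measure \<Rightarrow> real set" where
  "supp_dist D = {x. \<forall>e>0. 0 < measure D {x - e <..< x + e}}"

definition supp_interval :: "real measure \<Rightarrow> real set" where
  "supp_interval D = {x. \<exists>a\<in>supp_dist D. \<exists>b\<in>supp_dist D. a \<le> x \<and> x \<le> b}"

definition feasible_query :: "nat set set \<Rightarrow> (nat \<Rightarrow> real set) \<Rightarrow> nat set \<Rightarrow> (nat \<Rightarrow> real) \<Rightarrow> bool" where
  "feasible_query Es I Q w \<longleftrightarrow>
     (\<forall>e\<in>Es. \<exists>u\<in>e. \<forall>w'. (\<forall>v\<in>e \<inter> Q. w' v = w v) \<and> (\<forall>v\<in>e - Q. w' v \<in> I v)
                          \<longrightarrow> (\<forall>v\<in>e. w' u \<le> w' v))"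

(* Minimum cost (uniform costs: cardinality) of a feasible query set. *)
definition opt_cost :: "nat set \<Rightarrow> nat set set \<Rightarrow> (nat \<Rightarrow> real set) \<Rightarrow> (nat \<Rightarrow> real) \<Rightarrow> nat" where
  "opt_cost V Es I w = Min {card Q | Q. Q \<subseteq> V \<and> feasible_query Es I Q w}"

(* A (deterministic) strict two-stage algorithm: a fixed first-stage set U1 and a second-stage
   rule f depending only on the revealed weights of U1 (w restricted to U1); U1 \<union> U2 must be
   feasible for every realization (weights in the supports). The second stage must be a
   measurable function of the realization so that the expected cost is defined. *)
definition strict_two_stage ::
  "nat set \<Rightarrow> nat set set \<Rightarrow> (nat \<Rightarrow> real measure) \<Rightarrow> nat set \<Rightarrow> ((nat \<Rightarrow> real) \<Rightarrow> nat set) \<Rightarrow> bool" where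
  "strict_two_stage V Es D U1 f \<longleftrightarrow>
     U1 \<subseteq> V \<and>
     (\<forall>w. f w \<subseteq> V) \<and>
     (\<lambda>w. f (restrict w U1)) \<in> measurable (PiM V D) (count_space UNIV) \<and>
     (\<forall>w \<in> PiE V (\<lambda>v. supp_dist (D v)).
        feasible_query Es (\<lambda>v. supp_interval (D v)) (U1 \<union> f (restrict w U1)) w)"

end

theory Submission
  imports Defs "HOL-Probability.Probability"
begin


definition SS :: "nat \<Rightarrow> nat \<Rightarrow> real set" where
  "SS n v = {real v..<real v+1} \<union> {real n+1..<real n+2}"

definition Dm :: "nat \<Rightarrow> nat \<Rightarrow> real measure" where
  "Dm n v = density lborel (\<lambda>x. ennreal (1/2) * indicator (SS n v) x)"

lemma SS_borel[measurable]: "SS n v \<in> sets borel"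
  unfolding SS_def by measurable

lemma Dm_sets[simp]: "sets (Dm n v) = sets borel"
  unfolding Dm_def by simp

lemma Dm_space[simp]: "space (Dm n v) = UNIV"
  unfolding Dm_def by simp

lemma Dm_emeasure:
  assumes [measurable]: "X \<in> sets borel"
  shows "emeasure (Dm n v) X = ennreal (1/2) * emeasure lborel (SS n v \<inter> X)"
proof -
  have "emeasure (Dm n v) X = (\<integral>\<^sup>+ x. ennreal (1/2) * indicator (SS n v) x * indicator X x \<partial>lborel)"
    unfolding Dm_def by (subst emeasure_density) auto
  also have "\<dots> = (\<integral>\<^sup>+ x. ennreal (1/2) * indicator (SS n v \<inter> X) x \<partial>lborel)"
    by (intro nn_integral_cong) (auto simp: indicator_def)
  also have "\<dots> = ennreal (1/2) * emeasure lborel (SS n v \<inter> X)"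
    by (rule nn_integral_cmult_indicator) simp
  finally show ?thesis .
qed

lemma Dm_ac: "absolutely_continuous lborel (Dm n v)"
  unfolding Dm_def by (rule absolutely_continuousI_density) simp

lemma SS_Int_ge: "v < n \<Longrightarrow> SS n v \<inter> {real v + 1..} = {real n+1..<real n+2}"
  unfolding SS_def by auto

lemma SS_Int_hi: "v < n \<Longrightarrow> SS n v \<inter> {real n+1..<real n+2} = {real n+1..<real n+2}"
  unfolding SS_def by auto

lemma Dm_hi: "v < n \<Longrightarrow> emeasure (Dm n v) {real n+1..<real n+2} = ennreal (1/2)"
  by (simp add: Dm_emeasure SS_Int_hi)

lemma Dm_ge: "v < n \<Longrightarrow> emeasure (Dm n v) {real v + 1..} = ennreal (1/2)"
  by (simp add: Dm_emeasure SS_Int_ge)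

lemma Dm_prob: "v < n \<Longrightarrow> prob_space (Dm n v)"
proof
  assume "v < n"
  have "emeasure lborel (SS n v) = emeasure lborel {real v..<real v+1} + emeasure lborel {real n+1..<real n+2}"
    unfolding SS_def using \<open>v<n\<close> by (subst plus_emeasure) auto
  also have "\<dots> = 2" by simp
  finally have "emeasure lborel (SS n v) = 2" .
  then show "emeasure (Dm n v) (space (Dm n v)) = 1"
  proof -
    have "ennreal (1/2) * 2 = ennreal ((1/2) * 2)"
      by (subst ennreal_numeral[symmetric], subst ennreal_mult'[symmetric]) auto
    then have h: "ennreal (1/2) * 2 = 1" by simp
    show ?thesis using \<open>emeasure lborel (SS n v) = 2\<close> h by (simp add: Dm_emeasure del: ennreal_half)
  qed
qed

lemma Dm_pos:
  assumes X: "X \<in> sets borel" and lr: "l < r" "{l<..<r} \<subseteq> SS n v \<inter> X" and v: "v < n"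
  shows "0 < measure (Dm n v) X"
proof -
  interpret prob_space "Dm n v" using Dm_prob[OF v] .
  have "emeasure lborel {l<..<r} \<le> emeasure lborel (SS n v \<inter> X)"
    by (rule emeasure_mono) (use lr X in auto)
  then have "ennreal (r - l) \<le> emeasure lborel (SS n v \<inter> X)" using lr by simp
  moreover have "0 < ennreal (r - l)" using lr by simp
  ultimately have "0 < emeasure lborel (SS n v \<inter> X)" by (meson less_le_trans)
  then have "0 < emeasure (Dm n v) X" using X by (simp add: Dm_emeasure ennreal_zero_less_mult_iff ennreal_inverse_positive)
  then show ?thesis by (simp add: emeasure_eq_measure)
qed

lemma Dm_zero:
  assumes X: "X \<in> sets borel" and "SS n v \<inter> X = {}"
  shows "measure (Dm n v) X = 0"
  using assms by (simp add: measure_def Dm_emeasure)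

lemma supp_lower: "v < n \<Longrightarrow> supp_dist (Dm n v) \<subseteq> {real v..}"
proof
  assume vn: "v < n"
  fix x assume x: "x \<in> supp_dist (Dm n v)"
  show "x \<in> {real v..}"
  proof (rule ccontr)
    assume "x \<notin> {real v..}"
    then have "real v - x > 0" by simp
    with x have "0 < measure (Dm n v) {x - (real v - x)<..<x + (real v - x)}"
      unfolding supp_dist_def by blast
    moreover have "measure (Dm n v) {x - (real v - x)<..<x + (real v - x)} = 0"
      by (rule Dm_zero) (use vn in \<open>auto simp: SS_def\<close>)
    ultimately show False by simp
  qed
qed

lemma supp_mem:
  assumes v: "v < n" and x: "x \<in> {real v..real v+1} \<or> x \<in> {real n+1..real n+2}"
  shows "x \<in> supp_dist (Dm n v)"
  unfolding supp_dist_def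
proof (intro CollectI allI impI)
  fix e :: real assume e: "0 < e"
  show "0 < measure (Dm n v) {x - e<..<x + e}"
  proof (cases "x \<in> {real v..real v+1}")
    case True
    show ?thesis
      by (rule Dm_pos[where l="max (x-e) (real v)" and r="min (x+e) (real v+1)"])
         (use True e v in \<open>auto simp: SS_def\<close>)
  next
    case False
    with x have "x \<in> {real n+1..real n+2}" by force
    then show ?thesis
      by (intro Dm_pos[where l="max (x-e) (real n+1)" and r="min (x+e) (real n+2)"])
         (use e v in \<open>auto simp: SS_def\<close>)
  qed
qed

lemma int_lower: "v < n \<Longrightarrow> supp_interval (Dm n v) \<subseteq> {real v..}"
  using supp_lower[of v n] unfolding supp_interval_def by force

lemma int_v: "v < n \<Longrightarrow> real v \<in> supp_interval (Dm n v)"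
  unfolding supp_interval_def using supp_mem[of v n "real v"] by auto

lemma int_top: "v < n \<Longrightarrow> real n + 2 \<in> supp_interval (Dm n v)"
  unfolding supp_interval_def using supp_mem[of v n "real n + 2"] by auto



locale inst =
  fixes n :: nat and I :: "nat \<Rightarrow> real set"
  assumes n2: "2 \<le> n"
    and I_lower: "\<And>v. v < n \<Longrightarrow> I v \<subseteq> {real v..}"
    and I_v: "\<And>v. v < n \<Longrightarrow> real v \<in> I v"
    and I_top: "\<And>v. v < n \<Longrightarrow> real n + 2 \<in> I v"
begin

lemma feasible_prefix:
  assumes g: "g < n" and wg: "w g < real g + 1"
  shows "feasible_query {{0..<n}} I {0..<Suc g} w"
proof -
  let ?Q = "{0..<Suc g}"
  obtain u where u: "u \<in> ?Q" "w u = Min (w ` ?Q)"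
    by (metis (no_types, lifting) Min_in atLeastLessThan_empty_iff2 empty_is_image finite_atLeastLessThan
        finite_imageI imageE zero_less_Suc)
  have umin: "\<forall>x\<in>?Q. w u \<le> w x" using u by simp
  have "w u \<le> w g" using umin by simp
  show ?thesis unfolding feasible_query_def
  proof (intro ballI bexI[of _ u] allI impI)
    fix e w' v
    assume e: "e \<in> {{0..<n}}"
      and H: "(\<forall>v\<in>e \<inter> ?Q. w' v = w v) \<and> (\<forall>v\<in>e - ?Q. w' v \<in> I v)" and v: "v \<in> e"
    have ue: "u \<in> e" using e u g by auto
    then have wu: "w' u = w u" using H u by auto
    show "w' u \<le> w' v"
    proof (cases "v \<in> ?Q")
      case True
      then show ?thesis using H v wu umin by auto
    next
      case False
      then have "w' v \<in> I v" using H v by auto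
      moreover have "v < n" using v e by auto
      ultimately have "w' v \<ge> real v" using I_lower by auto
      moreover have "real v \<ge> real g + 1" using False by auto
      ultimately show ?thesis using wu \<open>w u \<le> w g\<close> wg by linarith
    qed
  next
    show "u \<in> e" if "e \<in> {{0..<n}}" for e using that u g by auto
  qed
qed

lemma feasible_all: "feasible_query {{0..<n}} I {0..<n} w"
proof -
  let ?Q = "{0..<n}"
  have ne: "?Q \<noteq> {}" using n2 by auto
  obtain u where u: "u \<in> ?Q" "w u = Min (w ` ?Q)"
    by (metis (no_types, lifting) Min_in ne empty_is_image finite_atLeastLessThan finite_imageI imageE)
  have umin: "\<forall>x\<in>?Q. w u \<le> w x" using u by simp
  show ?thesis unfolding feasible_query_def
    using u umin by (intro ballI bexI[of _ u]) auto
qed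

lemma alg_full:
  assumes Q: "Q \<subseteq> {0..<n}" and F: "feasible_query {{0..<n}} I Q w"
    and hi: "\<forall>v\<in>Q. real n + 1 \<le> w v \<and> w v < real n + 2"
  shows "Q = {0..<n}"
proof (rule ccontr)
  assume "Q \<noteq> {0..<n}"
  with Q obtain z where z: "z < n" "z \<notin> Q" by (metis atLeastLessThan_iff subsetI subset_antisym zero_le)
  from F obtain u where u: "u \<in> {0..<n}" and
    U: "\<And>w'. (\<forall>v\<in>{0..<n} \<inter> Q. w' v = w v) \<and> (\<forall>v\<in>{0..<n} - Q. w' v \<in> I v)
          \<longrightarrow> (\<forall>v\<in>{0..<n}. w' u \<le> w' v)"
    unfolding feasible_query_def by auto
  define w' where "w' = (\<lambda>v. if v \<in> Q then w v else if v = u then real n + 2 else real v)"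
  have "(\<forall>v\<in>{0..<n} \<inter> Q. w' v = w v) \<and> (\<forall>v\<in>{0..<n} - Q. w' v \<in> I v)"
    using I_v I_top by (auto simp: w'_def)
  then have all: "\<forall>v\<in>{0..<n}. w' u \<le> w' v" using U by blast
  show False
  proof (cases "u \<in> Q")
    case True
    then have "w' u \<ge> real n + 1" using hi by (simp add: w'_def)
    moreover have "w' z = real z" using z True by (auto simp: w'_def)
    moreover have "w' u \<le> w' z" using all z by simp
    ultimately show False using z by simp
  next
    case False
    define y :: nat where "y = (if u = 0 then 1 else 0)"
    have y: "y < n" "y \<noteq> u" using n2 by (auto simp: y_def)
    have wu: "w' u = real n + 2" using False by (simp add: w'_def)
    have "w' y < real n + 2"
      using hi y by (auto simp: w'_def)
    moreover have "w' u \<le> w' y" using all y by simp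
    ultimately show False using wu by simp
  qed
qed

lemma opt_set_finite: "finite {card Q |Q. Q \<subseteq> {0..<n} \<and> feasible_query {{0..<n}} I Q w}"
proof -
  have "{card Q |Q. Q \<subseteq> {0..<n} \<and> feasible_query {{0..<n}} I Q w} \<subseteq> card ` Pow {0..<n}" by auto
  then show ?thesis by (rule finite_subset) auto
qed

lemma opt_le: "Q \<subseteq> {0..<n} \<Longrightarrow> feasible_query {{0..<n}} I Q w \<Longrightarrow> opt_cost {0..<n} {{0..<n}} I w \<le> card Q"
  unfolding opt_cost_def by (rule Min_le[OF opt_set_finite]) auto

lemma opt_ge: "1 \<le> opt_cost {0..<n} {{0..<n}} I w"
proof -
  have ne: "{card Q |Q. Q \<subseteq> {0..<n} \<and> feasible_query {{0..<n}} I Q w} \<noteq> {}"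
    using feasible_all by auto
  have "opt_cost {0..<n} {{0..<n}} I w \<in> {card Q |Q. Q \<subseteq> {0..<n} \<and> feasible_query {{0..<n}} I Q w}"
    unfolding opt_cost_def by (rule Min_in[OF opt_set_finite ne])
  then obtain Q where Q: "Q \<subseteq> {0..<n}" "feasible_query {{0..<n}} I Q w"
    and c: "opt_cost {0..<n} {{0..<n}} I w = card Q" by auto
  have "Q \<noteq> {}"
  proof
    assume "Q = {}"
    then have "Q = {0..<n}" using alg_full[OF Q] by simp
    then show False using n2 \<open>Q = {}\<close> by auto
  qed
  moreover have "finite Q" using Q finite_subset by blast
  ultimately show ?thesis using c by (simp add: Suc_le_eq card_gt_0_iff)
qed

lemma opt_bound: "opt_cost {0..<n} {{0..<n}} I w \<le> 1 + card {k \<in> {1..<n}. \<forall>v<k. real v + 1 \<le> w v}"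
proof (cases "\<exists>g<n. w g < real g + 1")
  case True
  define g where "g = (LEAST g. g < n \<and> w g < real g + 1)"
  have g: "g < n" "w g < real g + 1" using LeastI_ex[OF True] unfolding g_def by auto
  have gmin: "\<And>v. v < g \<Longrightarrow> real v + 1 \<le> w v"
    using not_less_Least g(1) unfolding g_def by (metis less_trans not_le)
  have "{1..g} \<subseteq> {k \<in> {1..<n}. \<forall>v<k. real v + 1 \<le> w v}"
    using g gmin by auto
  then have "g \<le> card {k \<in> {1..<n}. \<forall>v<k. real v + 1 \<le> w v}"
    using card_mono[of "{k \<in> {1..<n}. \<forall>v<k. real v + 1 \<le> w v}" "{1..g}"] by simp
  moreover have "opt_cost {0..<n} {{0..<n}} I w \<le> card {0..<Suc g}"
    by (rule opt_le) (use g feasible_prefix in auto)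
  ultimately show ?thesis by simp
next
  case False
  then have "{k \<in> {1..<n}. \<forall>v<k. real v + 1 \<le> w v} = {1..<n}"
    by (auto simp: not_less) (metis less_trans not_le)
  moreover have "opt_cost {0..<n} {{0..<n}} I w \<le> card {0..<n}"
    by (rule opt_le) (use feasible_all in auto)
  ultimately show ?thesis by simp
qed

end



lemma real_key:
  fixes n k :: nat assumes n: "2 \<le> n"
  shows "ln (real n) / 2 \<le> real k \<or> ln (real n) / 2 \<le> real n * (1/2)^k"
proof (cases "ln (real n) / 2 \<le> real k")
  case False
  have e1: "exp (-1::real) \<le> 1/2"
  proof -
    have "2 \<le> exp (1::real)" using exp_ge_add_one_self[of 1] by simp
    then show ?thesis by (simp add: exp_minus field_simps)
  qed
  have "exp (- real k) = exp (-1::real) ^ k"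
    using exp_of_nat_mult[of k "-1::real"] by simp
  also have "\<dots> \<le> (1/2)^k" by (rule power_mono[OF e1]) simp
  finally have a: "exp (- real k) \<le> (1/2::real)^k" .
  have "exp (- (ln (real n) / 2)) \<le> exp (- real k)" using False by simp
  then have b: "exp (- (ln (real n) / 2)) \<le> (1/2)^k" using a by linarith
  have npos: "0 < real n" using n by simp
  have "exp (ln (real n) / 2) = real n * exp (- (ln (real n) / 2))"
  proof -
    have "real n = exp (ln (real n))" using npos by simp
    also have "\<dots> = exp (ln (real n) / 2 + ln (real n) / 2)" by simp
    finally have "real n * exp (- (ln (real n) / 2)) = exp (ln (real n) / 2 + ln (real n) / 2) * exp (- (ln (real n) / 2))"
      by simp
    also have "\<dots> = exp (ln (real n) / 2)" by (simp add: exp_add[symmetric])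
    finally show ?thesis by simp
  qed
  also have "\<dots> \<le> real n * (1/2)^k" using b npos by simp
  finally have "exp (ln (real n) / 2) \<le> real n * (1/2)^k" .
  moreover have "ln (real n) / 2 \<le> exp (ln (real n) / 2)"
    using exp_ge_add_one_self[of "ln (real n) / 2"] by linarith
  ultimately show ?thesis by linarith
qed simp

lemma geom_sum: "(\<Sum>k\<in>{1..<Suc m}. (1/2::real)^k) = 1 - (1/2)^m"
  by (induction m) (auto simp: field_simps)



definition DD :: "nat \<Rightarrow> nat \<Rightarrow> real measure" where
  "DD n v = Dm n (if v < n then v else 0)"

lemma DD_lt: "v < n \<Longrightarrow> DD n v = Dm n v" by (simp add: DD_def)

lemma DD_prob: "0 < n \<Longrightarrow> prob_space (DD n v)"
  unfolding DD_def by (rule Dm_prob) simp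

lemma DD_pp: "0 < n \<Longrightarrow> product_prob_space (DD n)"
  by (simp add: product_prob_space_def product_prob_space_axioms_def product_sigma_finite_def
      prob_space_imp_sigma_finite DD_prob)

lemma DD_inst: "2 \<le> n \<Longrightarrow> inst n (\<lambda>v. supp_interval (DD n v))"
  by unfold_locales (auto simp: DD_lt int_lower int_v int_top)

lemma coll_sets:
  assumes "finite J" "J \<subseteq> V" "\<And>v. v \<in> J \<Longrightarrow> X v \<in> sets borel"
  shows "{w \<in> space (PiM V (DD n)). \<forall>v\<in>J. w v \<in> X v} \<in> sets (PiM V (DD n))"
proof -
  have "\<And>v. v \<in> J \<Longrightarrow> {w \<in> space (PiM V (DD n)). w v \<in> X v} \<in> sets (PiM V (DD n))"
  proof -
    fix v assume v: "v \<in> J"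
    have "(\<lambda>w. w v) \<in> measurable (PiM V (DD n)) (DD n v)"
      using v assms(2) by (intro measurable_component_singleton) auto
    moreover have "X v \<in> sets (DD n v)" using assms(3)[OF v] by (simp add: DD_def)
    ultimately have ms: "(\<lambda>w. w v) -` X v \<inter> space (PiM V (DD n)) \<in> sets (PiM V (DD n))"
      by (rule measurable_sets)
    have eq: "{w \<in> space (PiM V (DD n)). w v \<in> X v} = (\<lambda>w. w v) -` X v \<inter> space (PiM V (DD n))"
      by auto
    show "{w \<in> space (PiM V (DD n)). w v \<in> X v} \<in> sets (PiM V (DD n))"
      using ms eq by simp
  qed
  then show ?thesis using assms(1)
    by (cases "J = {}") (auto intro: sets.sets_Collect_finite_All')
qed

lemma main:
  assumes n: "2 \<le> n"
  shows "0 < (\<integral>\<^sup>+ w. ennreal (real (opt_cost {0..<n} {{0..<n}} (\<lambda>v. supp_interval (DD n v)) w)) \<partial>PiM {0..<n} (DD n)) \<and>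
    (\<forall>U1 f. strict_two_stage {0..<n} {{0..<n}} (DD n) U1 f \<longrightarrow>
       (\<integral>\<^sup>+ w. ennreal (real (card (U1 \<union> f (restrict w U1)))) \<partial>PiM {0..<n} (DD n))
         \<ge> ennreal (1/4 * ln (real n)) * (\<integral>\<^sup>+ w. ennreal (real (opt_cost {0..<n} {{0..<n}} (\<lambda>v. supp_interval (DD n v)) w)) \<partial>PiM {0..<n} (DD n)))"
proof -
  let ?V = "{0..<n}"
  let ?P = "PiM {0..<n} (DD n)"
  let ?I = "\<lambda>v. supp_interval (DD n v)"
  let ?opt = "\<lambda>w. opt_cost ?V {?V} ?I w"
  let ?EOPT = "\<integral>\<^sup>+ w. ennreal (real (?opt w)) \<partial>?P"
  interpret pp: product_prob_space "DD n" ?V using DD_pp n by simp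
  interpret ins: inst n ?I using DD_inst n .
  have spaceP: "space ?P = PiE ?V (\<lambda>_. UNIV)" by (simp add: space_PiM DD_def)
  have sp1: "emeasure ?P (space ?P) = 1" by (rule pp.emeasure_space_1)
  have "(\<integral>\<^sup>+ w. 1 \<partial>?P) \<le> ?EOPT"
    by (rule nn_integral_mono) (use ins.opt_ge in \<open>simp add: ennreal_of_nat_eq_real_of_nat\<close>)
  then have EOPT_ge: "1 \<le> ?EOPT" using sp1 by simp
  then have EOPT_pos: "0 < ?EOPT" by (meson less_le_trans zero_less_one)
  define E where "E k = {w \<in> space ?P. \<forall>v\<in>{..<k}. w v \<in> {real v + 1..}}" for k
  have Es: "E k \<in> sets ?P" if "k \<le> n" for k
    unfolding E_def using that by (intro coll_sets) auto
  have Em: "emeasure ?P (E k) = ennreal ((1/2)^k)" if "k \<le> n" for k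
  proof -
    have "emeasure ?P (E k) = (\<Prod>v\<in>{..<k}. emeasure (DD n v) {real v + 1..})"
      unfolding E_def using that by (intro pp.emeasure_PiM_Collect) (auto simp: DD_def)
    also have "\<dots> = (\<Prod>v\<in>{..<k}. ennreal (1/2))"
      using that by (intro prod.cong refl) (simp add: DD_lt Dm_ge)
    also have "\<dots> = ennreal ((1/2)^k)" using ennreal_power[of "1/2" k] by simp
    finally show ?thesis .
  qed
  have pw: "ennreal (real (?opt w)) \<le> 1 + (\<Sum>k\<in>{1..<n}. indicator (E k) w)" if w: "w \<in> space ?P" for w
  proof -
    let ?S = "{k \<in> {1..<n}. \<forall>v<k. real v + 1 \<le> w v}"
    have "(\<Sum>k\<in>{1..<n}. indicator (E k) w :: ennreal) = (\<Sum>k\<in>{1..<n}. if k \<in> ?S then 1 else 0)"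
      using w by (intro sum.cong refl) (auto simp: E_def indicator_def)
    also have "\<dots> = (\<Sum>k\<in>?S. 1)" by (simp add: sum.inter_filter[symmetric])
    also have "\<dots> = of_nat (card ?S)" by simp
    finally have eq: "(\<Sum>k\<in>{1..<n}. indicator (E k) w :: ennreal) = of_nat (card ?S)" .
    have "ennreal (real (?opt w)) \<le> ennreal (real (1 + card ?S))"
      using ins.opt_bound[of w] by (intro ennreal_leI) simp
    also have "\<dots> = 1 + of_nat (card ?S)" by (simp add: ennreal_of_nat_eq_real_of_nat)
    finally show ?thesis using eq by simp
  qed
  have "?EOPT \<le> (\<integral>\<^sup>+ w. 1 + (\<Sum>k\<in>{1..<n}. indicator (E k) w) \<partial>?P)"
    by (rule nn_integral_mono) (rule pw)
  also have "\<dots> = (\<integral>\<^sup>+ w. 1 \<partial>?P) + (\<integral>\<^sup>+ w. (\<Sum>k\<in>{1..<n}. indicator (E k) w) \<partial>?P)"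
    using Es by (intro nn_integral_add) auto
  also have "(\<integral>\<^sup>+ w. (\<Sum>k\<in>{1..<n}. indicator (E k) w) \<partial>?P) = (\<Sum>k\<in>{1..<n}. (\<integral>\<^sup>+ w. indicator (E k) w \<partial>?P))"
    using Es by (intro nn_integral_sum) auto
  also have "\<dots> = (\<Sum>k\<in>{1..<n}. ennreal ((1/2)^k))"
    using Es Em by (intro sum.cong refl) auto
  also have "\<dots> = ennreal (\<Sum>k\<in>{1..<n}. (1/2)^k)" by simp
  finally have EO1: "?EOPT \<le> (\<integral>\<^sup>+ w. 1 \<partial>?P) + ennreal (\<Sum>k\<in>{1..<n}. (1/2)^k)" .
  have "(\<Sum>k\<in>{1..<n}. (1/2::real)^k) \<le> 1"
  proof -
    obtain m where "n = Suc m" using n by (cases n) auto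
    then show ?thesis using geom_sum[of m] by simp
  qed
  hence g1: "ennreal (\<Sum>k\<in>{1..<n}. (1/2::real)^k) \<le> 1" by (simp add: ennreal_le_1)
  have EOPT_le: "?EOPT \<le> 2"
  proof -
    have i1: "(\<integral>\<^sup>+ w. 1 \<partial>?P) = 1" using sp1 by simp
    have "(\<integral>\<^sup>+ w. 1 \<partial>?P) + ennreal (\<Sum>k\<in>{1..<n}. (1/2)^k) \<le> 1 + 1"
      unfolding i1 using g1 by (rule add_left_mono)
    then show ?thesis using EO1 by (simp add: one_add_one)
  qed
  show ?thesis
  proof (intro conjI allI impI EOPT_pos)
    fix U1 f assume S: "strict_two_stage ?V {?V} (DD n) U1 f"
    have U1V: "U1 \<subseteq> ?V" and fV: "\<And>w. f w \<subseteq> ?V"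
      and feas: "\<And>w. w \<in> PiE ?V (\<lambda>v. supp_dist (DD n v)) \<Longrightarrow>
          feasible_query {?V} ?I (U1 \<union> f (restrict w U1)) w"
      using S unfolding strict_two_stage_def by auto
    have finU1: "finite U1" using U1V finite_subset by blast
    let ?k = "card U1"
    let ?LHS = "\<integral>\<^sup>+ w. ennreal (real (card (U1 \<union> f (restrict w U1)))) \<partial>?P"
    define B where "B = {w \<in> space ?P. \<forall>v\<in>U1. w v \<in> {real n+1..<real n+2}}"
    have Bs: "B \<in> sets ?P" unfolding B_def using finU1 U1V by (intro coll_sets) auto
    have Bm: "emeasure ?P B = ennreal ((1/2)^?k)"
    proof -
      have "emeasure ?P B = (\<Prod>v\<in>U1. emeasure (DD n v) {real n+1..<real n+2})"
        unfolding B_def using finU1 U1V by (intro pp.emeasure_PiM_Collect) (auto simp: DD_def)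
      also have "\<dots> = (\<Prod>v\<in>U1. ennreal (1/2))"
        using U1V by (intro prod.cong refl) (auto simp: DD_lt Dm_hi)
      also have "\<dots> = ennreal ((1/2)^?k)" using ennreal_power[of "1/2" ?k] by simp
      finally show ?thesis .
    qed
    have full: "card (U1 \<union> f (restrict w U1)) = n" if wB: "w \<in> B" for w
    proof -
      define w'' where "w'' = (\<lambda>v. if v \<in> ?V then (if v \<in> U1 then w v else real n + 1) else undefined)"
      have wr: "\<forall>v\<in>U1. real n + 1 \<le> w v \<and> w v < real n + 2" using wB by (auto simp: B_def)
      have "w'' \<in> PiE ?V (\<lambda>v. supp_dist (DD n v))"
        unfolding PiE_iff
      proof
        show "\<forall>v\<in>?V. w'' v \<in> supp_dist (DD n v)"
          using wr by (auto simp: w''_def DD_lt intro!: supp_mem)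
        show "w'' \<in> extensional ?V" by (auto simp: w''_def extensional_def)
      qed
      then have F: "feasible_query {?V} ?I (U1 \<union> f (restrict w'' U1)) w''" by (rule feas)
      have rr: "restrict w'' U1 = restrict w U1"
        using U1V by (auto simp: restrict_def w''_def fun_eq_iff)
      have Q: "U1 \<union> f (restrict w U1) \<subseteq> ?V" using U1V fV by auto
      have hi: "\<forall>v\<in>U1 \<union> f (restrict w U1). real n + 1 \<le> w'' v \<and> w'' v < real n + 2"
        using Q wr by (auto simp: w''_def)
      have "U1 \<union> f (restrict w U1) = ?V"
        using ins.alg_full[OF Q _ hi] F rr by simp
      then show ?thesis by simp
    qed
    have L1: "ennreal (real ?k) \<le> ?LHS"
    proof -
      have "(\<integral>\<^sup>+ w. ennreal (real ?k) \<partial>?P) \<le> ?LHS"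
      proof (rule nn_integral_mono)
        fix w
        have "card U1 \<le> card (U1 \<union> f (restrict w U1))"
          using fV U1V by (intro card_mono) (auto intro: finite_subset)
        then show "ennreal (real ?k) \<le> ennreal (real (card (U1 \<union> f (restrict w U1))))"
          by (intro ennreal_leI) simp
      qed
      then show ?thesis using sp1 by simp
    qed
    have L2: "ennreal (real n * (1/2)^?k) \<le> ?LHS"
    proof -
      have "(\<integral>\<^sup>+ w. ennreal (real n) * indicator B w \<partial>?P) \<le> ?LHS"
      proof (rule nn_integral_mono)
        fix w
        show "ennreal (real n) * indicator B w \<le> ennreal (real (card (U1 \<union> f (restrict w U1))))"
          using full[of w] by (cases "w \<in> B") auto
      qed
      moreover have "(\<integral>\<^sup>+ w. ennreal (real n) * indicator B w \<partial>?P) = ennreal (real n * (1/2)^?k)"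
        using Bs Bm by (simp add: nn_integral_cmult_indicator ennreal_mult)
      ultimately show ?thesis by simp
    qed
    have "ennreal (1/4 * ln (real n)) * ?EOPT \<le> ennreal (1/4 * ln (real n)) * 2"
      by (rule mult_left_mono[OF EOPT_le]) simp
    also have "\<dots> = ennreal (ln (real n) / 2)"
      using ennreal_mult'[of 2 "1/4 * ln (real n)"] n by (simp add: mult.commute)
    also have "\<dots> \<le> ?LHS"
      using real_key[OF n, of ?k]
    proof
      assume "ln (real n) / 2 \<le> real ?k"
      then show ?thesis using L1 by (meson ennreal_leI order_trans)
    next
      assume "ln (real n) / 2 \<le> real n * (1/2)^?k"
      then show ?thesis using L2 by (meson ennreal_leI order_trans)
    qed
    finally show "ennreal (1/4 * ln (real n)) * ?EOPT \<le> ?LHS" .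
  qed
qed


theorem theoremA2:
  shows "\<exists>c::real. c > 0 \<and>
    (\<forall>n::nat. n \<ge> 2 \<longrightarrow>
      (\<exists>D :: nat \<Rightarrow> real measure.
         (\<forall>v<n. prob_space (D v) \<and> sets (D v) = sets borel \<and> absolutely_continuous lborel (D v)) \<and>
         (let V = {0..<n}; Es = {V}; I = (\<lambda>v. supp_interval (D v)); P = PiM V D;
              EOPT = (\<integral>\<^sup>+ w. ennreal (real (opt_cost V Es I w)) \<partial>P)
          in 0 < EOPT \<and>
             (\<forall>U1 f. strict_two_stage V Es D U1 f \<longrightarrow>
                (\<integral>\<^sup>+ w. ennreal (real (card (U1 \<union> f (restrict w U1)))) \<partial>P)
                  \<ge> ennreal (c * ln (real n)) * EOPT))))"
proof (intro exI[of _ "1/4"] conjI allI impI)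
  fix n :: nat assume n: "2 \<le> n"
  show "\<exists>D :: nat \<Rightarrow> real measure.
         (\<forall>v<n. prob_space (D v) \<and> sets (D v) = sets borel \<and> absolutely_continuous lborel (D v)) \<and>
         (let V = {0..<n}; Es = {V}; I = (\<lambda>v. supp_interval (D v)); P = PiM V D;
              EOPT = (\<integral>\<^sup>+ w. ennreal (real (opt_cost V Es I w)) \<partial>P)
          in 0 < EOPT \<and>
             (\<forall>U1 f. strict_two_stage V Es D U1 f \<longrightarrow>
                (\<integral>\<^sup>+ w. ennreal (real (card (U1 \<union> f (restrict w U1)))) \<partial>P)
                  \<ge> ennreal (1/4 * ln (real n)) * EOPT))"
  proof (intro exI[of _ "DD n"] conjI allI impI)
    fix v assume v: "v < n"
    show "prob_space (DD n v)" using v by (simp add: DD_prob)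
    show "sets (DD n v) = sets borel" by (simp add: DD_def)
    show "absolutely_continuous lborel (DD n v)" by (simp add: DD_def Dm_ac)
  next
    show "let V = {0..<n}; Es = {V}; I = (\<lambda>v. supp_interval (DD n v)); P = PiM V (DD n);
              EOPT = (\<integral>\<^sup>+ w. ennreal (real (opt_cost V Es I w)) \<partial>P)
          in 0 < EOPT \<and>
             (\<forall>U1 f. strict_two_stage V Es (DD n) U1 f \<longrightarrow>
                (\<integral>\<^sup>+ w. ennreal (real (card (U1 \<union> f (restrict w U1)))) \<partial>P)
                  \<ge> ennreal (1/4 * ln (real n)) * EOPT)"
      unfolding Let_def by (rule main[OF n])
  qed
qed simp


end
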